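(* Let $\Gamma$ be a regular social purpose game. Then for every Nash equilibrium $x^{NE}$ and every social optimum $x^{SO}$ of $\Gamma$, $$\sum_{i=1}^n x^{NE}_i\le\sum_{i=1}^n x^{SO}_i.$$
   Context: A social purpose game $\Gamma=\langle N,\overline{Q},H,(\alpha_i,h_i,g_i)_{i\in N}\rangle$ consists of a player set $N=\{1,\dots,n\}$ with $n\ge 2$, a number $\overline{Q}>0$ such that every player's strategy set is $S_i=[0,\overline{Q}]$, a function $H\colon\mathbb{R}\to\mathbb{R}$, and for each $i\in N$ a weight $\alpha_i>0$ and functions $h_i,g_i\colon[0,\overline{Q}]\to\mathbb{R}$. The payoff of player $i$ at $x\in[0,\overline{Q}]^N$ is $\pi_i(x)=\alpha_i H\big(\sum_{j=1}^n h_j(x_j)\big)-g_i(x_i)$. A Nash equilibrium is a profile $x^*$ with $\pi_i(x^* )\ge\pi_i(y_i,x^*_{-i})$ for all $i$ and all $y_i$; a social optimum is a maximizer of $\sum_{i\in N}\pi_i$ over $[0,\overline{Q}]^N$. $\Gamma$ is regular if: each $h_i$ is the identity $h_i(x_i)=x_i$; $H$ is continuously differentiable, increasing and concave; and each $g_i$ is continuously differentiable, increasing and convex. *)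

theory Defs
  imports "HOL-Analysis.Analysis"
begin

text \<open>Social purpose game with players N = {1..n}. A strategy profile is a function
  x :: nat => real; only the components in {1..n} matter.\<close>

definition profile :: "nat \<Rightarrow> real \<Rightarrow> (nat \<Rightarrow> real) \<Rightarrow> bool" where
  "profile n Q x \<longleftrightarrow> (\<forall>i\<in>{1..n}. x i \<in> {0..Q})"

definition payoff ::
  "nat \<Rightarrow> (real \<Rightarrow> real) \<Rightarrow> (nat \<Rightarrow> real) \<Rightarrow> (nat \<Rightarrow> real \<Rightarrow> real) \<Rightarrow> (nat \<Rightarrow> real \<Rightarrow> real)
    \<Rightarrow> nat \<Rightarrow> (nat \<Rightarrow> real) \<Rightarrow> real" where
  "payoff n H \<alpha> h g i x = \<alpha> i * H (\<Sum>j\<in>{1..n}. h j (x j)) - g i (x i)"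

definition nash_equilibrium ::
  "nat \<Rightarrow> real \<Rightarrow> (real \<Rightarrow> real) \<Rightarrow> (nat \<Rightarrow> real) \<Rightarrow> (nat \<Rightarrow> real \<Rightarrow> real) \<Rightarrow> (nat \<Rightarrow> real \<Rightarrow> real)
    \<Rightarrow> (nat \<Rightarrow> real) \<Rightarrow> bool" where
  "nash_equilibrium n Q H \<alpha> h g x \<longleftrightarrow> profile n Q x \<and>
     (\<forall>i\<in>{1..n}. \<forall>y\<in>{0..Q}. payoff n H \<alpha> h g i x \<ge> payoff n H \<alpha> h g i (x(i := y)))"

definition social_optimum ::
  "nat \<Rightarrow> real \<Rightarrow> (real \<Rightarrow> real) \<Rightarrow> (nat \<Rightarrow> real) \<Rightarrow> (nat \<Rightarrow> real \<Rightarrow> real) \<Rightarrow> (nat \<Rightarrow> real \<Rightarrow> real)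
    \<Rightarrow> (nat \<Rightarrow> real) \<Rightarrow> bool" where
  "social_optimum n Q H \<alpha> h g x \<longleftrightarrow> profile n Q x \<and>
     (\<forall>y. profile n Q y \<longrightarrow>
        (\<Sum>i\<in>{1..n}. payoff n H \<alpha> h g i y) \<le> (\<Sum>i\<in>{1..n}. payoff n H \<alpha> h g i x))"

definition regular ::
  "nat \<Rightarrow> real \<Rightarrow> (real \<Rightarrow> real) \<Rightarrow> (nat \<Rightarrow> real \<Rightarrow> real) \<Rightarrow> (nat \<Rightarrow> real \<Rightarrow> real) \<Rightarrow> bool" where
  "regular n Q H h g \<longleftrightarrow>
     (\<forall>i\<in>{1..n}. \<forall>t\<in>{0..Q}. h i t = t) \<and>
     (\<exists>H'. (\<forall>s. (H has_real_derivative H' s) (at s)) \<and> continuous_on UNIV H') \<and>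
     strict_mono H \<and> concave_on UNIV H \<and>
     (\<forall>i\<in>{1..n}.
        (\<exists>g'. (\<forall>t\<in>{0..Q}. (g i has_real_derivative g' t) (at t within {0..Q})) \<and>
              continuous_on {0..Q} g') \<and>
        strict_mono_on {0..Q} (g i) \<and> convex_on {0..Q} (g i))"

end

theory Submission
  imports Defs
begin

lemma convex_incr:
  fixes f :: "real \<Rightarrow> real"
  assumes f: "convex_on I f" and I: "u \<in> I" "v + d \<in> I" and uv: "u \<le> v" and d: "d > 0"
  shows "f (u + d) + f v \<le> f u + f (v + d)"
proof -
  define L where "L = v + d - u"
  have L: "L > 0" using uv d by (simp add: L_def)
  define s where "s = d / L"
  have s: "0 \<le> s" "s \<le> 1" using L d uv by (auto simp: s_def L_def field_simps)
  have sL: "s * L = d" using L by (simp add: s_def)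
  have e1: "(1 - s) *\<^sub>R u + s *\<^sub>R (v + d) = u + d"
  proof -
    have "(1 - s) *\<^sub>R u + s *\<^sub>R (v + d) = u + s * L" by (simp add: L_def algebra_simps)
    then show ?thesis using sL by simp
  qed
  have e2: "(1 - (1 - s)) *\<^sub>R u + (1 - s) *\<^sub>R (v + d) = v"
  proof -
    have "(1 - (1 - s)) *\<^sub>R u + (1 - s) *\<^sub>R (v + d) = v + d - s * L" by (simp add: L_def algebra_simps)
    then show ?thesis using sL by simp
  qed
  have 1: "f (u + d) \<le> (1 - s) * f u + s * f (v + d)"
    using convex_onD[OF f, of s u "v+d"] s I e1 by simp
  have 2: "f v \<le> (1 - (1 - s)) * f u + (1 - s) * f (v + d)"
    using convex_onD[OF f, of "1 - s" u "v+d"] s I e2 by simp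
  show ?thesis using 1 2 by (simp add: algebra_simps)
qed

lemma concave_incr:
  fixes f :: "real \<Rightarrow> real"
  assumes f: "concave_on UNIV f" and uv: "u \<le> v" and d: "d > 0"
  shows "f (u + d) + f v \<ge> f u + f (v + d)"
  using convex_incr[of UNIV "\<lambda>x. - f x" u v d] f uv d by (simp add: concave_on_def)

lemma sum_upd:
  fixes f :: "nat \<Rightarrow> real \<Rightarrow> real"
  assumes "finite A" "i \<in> A"
  shows "(\<Sum>j\<in>A. f j ((x(i:=y)) j)) = (\<Sum>j\<in>A. f j (x j)) - f i (x i) + f i y"
proof -
  have "(\<Sum>j\<in>A. f j ((x(i:=y)) j)) = f i y + (\<Sum>j\<in>A-{i}. f j ((x(i:=y)) j))"
    using sum.remove[OF assms, of "\<lambda>j. f j ((x(i:=y)) j)"] by simp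
  also have "(\<Sum>j\<in>A-{i}. f j ((x(i:=y)) j)) = (\<Sum>j\<in>A-{i}. f j (x j))"
    by (rule sum.cong) auto
  also have "\<dots> = (\<Sum>j\<in>A. f j (x j)) - f i (x i)"
    using sum.remove[OF assms, of "\<lambda>j. f j (x j)"] by simp
  finally show ?thesis by simp
qed

lemma hsum:
  assumes "regular n Q H h g" "profile n Q x"
  shows "(\<Sum>j\<in>{1..n}. h j (x j)) = (\<Sum>j\<in>{1..n}. x j)"
  using assms unfolding regular_def profile_def by (intro sum.cong) auto

lemma profile_upd:
  assumes "profile n Q x" "y \<in> {0..Q}"
  shows "profile n Q (x(i:=y))"
  using assms unfolding profile_def by auto

lemma sum_payoff:
  "(\<Sum>k\<in>{1..n}. payoff n H \<alpha> h g k x) =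
     (\<Sum>k\<in>{1..n}. \<alpha> k) * H (\<Sum>j\<in>{1..n}. h j (x j)) - (\<Sum>k\<in>{1..n}. g k (x k))"
  unfolding payoff_def by (simp add: sum_subtractf sum_distrib_right)

theorem proposition5:
  fixes n :: nat and Q :: real and H :: "real \<Rightarrow> real" and \<alpha> :: "nat \<Rightarrow> real"
    and h g :: "nat \<Rightarrow> real \<Rightarrow> real" and xNE xSO :: "nat \<Rightarrow> real"
  assumes "n \<ge> 2" and "Q > 0" and "\<forall>i\<in>{1..n}. \<alpha> i > 0"
    and "regular n Q H h g"
    and "nash_equilibrium n Q H \<alpha> h g xNE"
    and "social_optimum n Q H \<alpha> h g xSO"
  shows "(\<Sum>i\<in>{1..n}. xNE i) \<le> (\<Sum>i\<in>{1..n}. xSO i)"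
proof (rule ccontr)
  define N where "N = {1..n}"
  define SN where "SN = (\<Sum>i\<in>N. xNE i)"
  define SS where "SS = (\<Sum>i\<in>N. xSO i)"
  define A where "A = (\<Sum>k\<in>N. \<alpha> k)"
  assume "\<not> ?thesis"
  hence SNS: "SS < SN" by (simp add: SN_def SS_def N_def)
  have fin: "finite N" by (simp add: N_def)
  obtain i where iN: "i \<in> N" and gt: "xSO i < xNE i"
  proof (rule ccontr)
    assume "\<not> thesis"
    with that have "\<forall>i\<in>N. xNE i \<le> xSO i" by force
    hence "SN \<le> SS" unfolding SN_def SS_def by (intro sum_mono) auto
    with SNS show False by simp
  qed
  have pNE: "profile n Q xNE" and pSO: "profile n Q xSO"
    using assms(5,6) by (auto simp: nash_equilibrium_def social_optimum_def)
  define a where "a = xSO i"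
  define b where "b = xNE i"
  have a: "0 \<le> a" "a \<le> Q" and b: "0 \<le> b" "b \<le> Q"
    using pNE pSO iN by (auto simp: profile_def a_def b_def N_def)
  define \<delta> where "\<delta> = min (b - a) (SN - SS)"
  have dpos: "\<delta> > 0" using gt SNS by (simp add: \<delta>_def a_def b_def)
  have d1: "\<delta> \<le> b - a" "\<delta> \<le> SN - SS" by (auto simp: \<delta>_def)
  have reg: "strict_mono H" "concave_on UNIV H" "convex_on {0..Q} (g i)"
    using assms(4) iN by (auto simp: regular_def N_def)
  have yNE: "b - \<delta> \<in> {0..Q}" using d1 a b dpos by auto
  have "payoff n H \<alpha> h g i xNE \<ge> payoff n H \<alpha> h g i (xNE(i := b - \<delta>))"
    using assms(5) iN yNE by (auto simp: nash_equilibrium_def N_def)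
  moreover have "(\<Sum>j\<in>N. h j ((xNE(i := b - \<delta>)) j)) = SN - \<delta>"
    using hsum[OF assms(4) profile_upd[OF pNE yNE]] sum_upd[OF fin iN, of "\<lambda>j t. t" xNE "b - \<delta>"]
    by (simp add: N_def SN_def b_def)
  moreover have "(\<Sum>j\<in>N. h j (xNE j)) = SN" using hsum[OF assms(4) pNE] by (simp add: N_def SN_def)
  ultimately have NE: "\<alpha> i * H (SN - \<delta>) - g i (b - \<delta>) \<le> \<alpha> i * H SN - g i b"
    by (simp add: payoff_def N_def b_def)
  have ySO: "a + \<delta> \<in> {0..Q}" using d1 a b dpos by auto
  have "(\<Sum>k\<in>N. payoff n H \<alpha> h g k (xSO(i := a + \<delta>))) \<le> (\<Sum>k\<in>N. payoff n H \<alpha> h g k xSO)"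
    using assms(6) profile_upd[OF pSO ySO] by (auto simp: social_optimum_def N_def)
  moreover have "(\<Sum>j\<in>N. h j ((xSO(i := a + \<delta>)) j)) = SS + \<delta>"
    using hsum[OF assms(4) profile_upd[OF pSO ySO]] sum_upd[OF fin iN, of "\<lambda>j t. t" xSO "a + \<delta>"]
    by (simp add: N_def SS_def a_def)
  moreover have "(\<Sum>j\<in>N. h j (xSO j)) = SS" using hsum[OF assms(4) pSO] by (simp add: N_def SS_def)
  moreover have "(\<Sum>k\<in>N. g k ((xSO(i := a + \<delta>)) k)) = (\<Sum>k\<in>N. g k (xSO k)) - g i a + g i (a + \<delta>)"
    using sum_upd[OF fin iN, of g xSO "a + \<delta>"] by (simp add: a_def)
  ultimately have SO: "A * H (SS + \<delta>) - g i (a + \<delta>) \<le> A * H SS - g i a"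
    using sum_payoff[of n H \<alpha> h g "xSO(i := a + \<delta>)"] sum_payoff[of n H \<alpha> h g xSO]
    unfolding N_def[symmetric] A_def[symmetric] by simp
  have cg: "g i (a + \<delta>) + g i (b - \<delta>) \<le> g i a + g i (b - \<delta> + \<delta>)"
    using convex_incr[OF reg(3), of a "b - \<delta>" \<delta>] a b d1 dpos by auto
  have cH: "H (SS + \<delta>) + H (SN - \<delta>) \<ge> H SS + H (SN - \<delta> + \<delta>)"
    using concave_incr[OF reg(2), of SS "SN - \<delta>" \<delta>] d1 dpos by auto
  define D where "D = H SN - H (SN - \<delta>)"
  have Dpos: "D > 0" using reg(1) dpos unfolding D_def strict_mono_def by simp
  have apos: "\<forall>k\<in>N. \<alpha> k > 0" using assms(3) by (simp add: N_def)
  have "A > \<alpha> i"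
  proof -
    have "A = \<alpha> i + (\<Sum>k\<in>N-{i}. \<alpha> k)" unfolding A_def using sum.remove[OF fin iN] by simp
    moreover have "(\<Sum>k\<in>N-{i}. \<alpha> k) > 0"
    proof (rule sum_pos)
      show "finite (N - {i})" using fin by simp
      show "N - {i} \<noteq> {}"
      proof
        assume "N - {i} = {}"
        hence "N \<subseteq> {i}" by auto
        hence "card N \<le> 1" using card_mono[of "{i}" N] by simp
        thus False using assms(1) by (simp add: N_def)
      qed
      show "\<And>k. k \<in> N - {i} \<Longrightarrow> 0 < \<alpha> k" using apos by simp
    qed
    ultimately show ?thesis by simp
  qed
  have Apos: "A > 0" using \<open>A > \<alpha> i\<close> apos iN by (meson less_trans)
  have "A * D \<le> A * (H (SS + \<delta>) - H SS)"
    using cH Apos by (intro mult_left_mono) (auto simp: D_def)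
  also have "\<dots> \<le> g i (a + \<delta>) - g i a" using SO by (simp add: algebra_simps)
  also have "\<dots> \<le> g i b - g i (b - \<delta>)" using cg by simp
  also have "\<dots> \<le> \<alpha> i * D" using NE by (simp add: D_def algebra_simps)
  finally have "A * D \<le> \<alpha> i * D" .
  hence "A \<le> \<alpha> i" using Dpos by simp
  with \<open>A > \<alpha> i\<close> show False by simp
qed

end
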